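(* For every integer $n\ge 3$ with $n\equiv 1$ or $n\equiv 3\pmod 4$, $\gamma_p(C_n\times C_4)=\gamma_t(C_n\times C_4)=n+1$.
   Context: All graphs are finite, simple and undirected. $C_n$ denotes the cycle of order $n$ and $G\times H$ the Cartesian product of graphs. For a graph $G$ without isolated vertices: a set $D\subseteq V(G)$ is a total dominating set if every vertex of $G$ (including those in $D$) has a neighbour in $D$; $\gamma_t(G)$ is the minimum size of a total dominating set. A set $D\subseteq V(G)$ is a paired dominating set if every vertex outside $D$ has a neighbour in $D$ and the induced subgraph $G[D]$ has a perfect matching; $\gamma_p(G)$ is the minimum size of a paired dominating set. *)

theory Defs
  imports Main
begin

text \<open>A simple graph is given by a vertex set V and a symmetric irreflexive
adjacency relation E (only its restriction to V matters).\<close>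

definition cycle_adj :: "nat \<Rightarrow> nat \<Rightarrow> nat \<Rightarrow> bool" where
  "cycle_adj n i j \<longleftrightarrow> i < n \<and> j < n \<and> (j = (i + 1) mod n \<or> i = (j + 1) mod n) \<and> i \<noteq> j"

definition cycle_verts :: "nat \<Rightarrow> nat set" where
  "cycle_verts n = {0..<n}"

definition cart_adj :: "('a \<Rightarrow> 'a \<Rightarrow> bool) \<Rightarrow> ('b \<Rightarrow> 'b \<Rightarrow> bool) \<Rightarrow> ('a \<times> 'b) \<Rightarrow> ('a \<times> 'b) \<Rightarrow> bool" where
  "cart_adj E1 E2 p q \<longleftrightarrow> (fst p = fst q \<and> E2 (snd p) (snd q)) \<or> (snd p = snd q \<and> E1 (fst p) (fst q))"

definition total_dom_set :: "'a set \<Rightarrow> ('a \<Rightarrow> 'a \<Rightarrow> bool) \<Rightarrow> 'a set \<Rightarrow> bool" where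
  "total_dom_set V E D \<longleftrightarrow> D \<subseteq> V \<and> (\<forall>v\<in>V. \<exists>u\<in>D. E v u)"

definition perfect_matching :: "'a set \<Rightarrow> ('a \<Rightarrow> 'a \<Rightarrow> bool) \<Rightarrow> 'a set set \<Rightarrow> bool" where
  "perfect_matching D E M \<longleftrightarrow>
     (\<forall>e\<in>M. \<exists>u v. e = {u, v} \<and> u \<in> D \<and> v \<in> D \<and> u \<noteq> v \<and> E u v) \<and>
     (\<forall>v\<in>D. \<exists>!e. e \<in> M \<and> v \<in> e)"

definition paired_dom_set :: "'a set \<Rightarrow> ('a \<Rightarrow> 'a \<Rightarrow> bool) \<Rightarrow> 'a set \<Rightarrow> bool" where
  "paired_dom_set V E D \<longleftrightarrow> D \<subseteq> V \<and> (\<forall>v\<in>V - D. \<exists>u\<in>D. E v u) \<and>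
     (\<exists>M. perfect_matching D E M)"

definition total_dom_number :: "'a set \<Rightarrow> ('a \<Rightarrow> 'a \<Rightarrow> bool) \<Rightarrow> nat" where
  "total_dom_number V E = (LEAST k. \<exists>D. total_dom_set V E D \<and> card D = k)"

definition paired_dom_number :: "'a set \<Rightarrow> ('a \<Rightarrow> 'a \<Rightarrow> bool) \<Rightarrow> nat" where
  "paired_dom_number V E = (LEAST k. \<exists>D. paired_dom_set V E D \<and> card D = k)"

end

theory Submission
  imports Defs "HOL-Library.Product_Lexorder"
begin

lemma cyc_sym: "cycle_adj n i j \<Longrightarrow> cycle_adj n j i"
  unfolding cycle_adj_def by auto

lemma cyc_irr: "\<not> cycle_adj n i i"
  unfolding cycle_adj_def by auto

lemma cart_sym: "cart_adj (cycle_adj n) (cycle_adj m) p q \<Longrightarrow> cart_adj (cycle_adj n) (cycle_adj m) q p"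
  unfolding cart_adj_def using cyc_sym by metis

lemma cart_irr: "\<not> cart_adj (cycle_adj n) (cycle_adj m) p p"
  unfolding cart_adj_def using cyc_irr by metis

lemma cyc_nb: assumes "cycle_adj n i j" shows "i = (j + 1) mod n \<or> i = (j + n - 1) mod n"
proof -
  from assms have ij: "i < n" "j < n" "j = (i + 1) mod n \<or> i = (j + 1) mod n"
    unfolding cycle_adj_def by auto
  show ?thesis
  proof (cases "i = (j + 1) mod n")
    case False
    then have "j = (i + 1) mod n" using ij by auto
    show ?thesis
    proof (cases "i + 1 < n")
      case True
      then have "j = i + 1" using \<open>j = (i + 1) mod n\<close> by simp
      then have "(j + n - 1) mod n = (i + n) mod n" by simp
      also have "\<dots> = i" using ij by simp
      finally show ?thesis by simp
    next
      case False
      then have "i + 1 = n" using ij by simp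
      then have "j = 0" using \<open>j = (i + 1) mod n\<close> by simp
      then have "(j + n - 1) mod n = n - 1" using ij by simp
      then have "i = (j + n - 1) mod n" using \<open>i + 1 = n\<close> by simp
      then show ?thesis by blast
    qed
  qed simp
qed

lemma nbset_sub:
  fixes n :: nat
  shows "{v \<in> {0..<n} \<times> {0..<4}. cart_adj (cycle_adj n) (cycle_adj 4) v u} \<subseteq>
     {(fst u, (snd u + 1) mod 4), (fst u, (snd u + 4 - 1) mod 4), ((fst u + 1) mod n, snd u), ((fst u + n - 1) mod n, snd u)}"
proof
  fix v assume "v \<in> {v \<in> {0..<n} \<times> {0..<4}. cart_adj (cycle_adj n) (cycle_adj 4) v u}"
  then have "cart_adj (cycle_adj n) (cycle_adj 4) v u" by simp
  then have "(fst v = fst u \<and> cycle_adj 4 (snd v) (snd u)) \<or> (snd v = snd u \<and> cycle_adj n (fst v) (fst u))"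
    unfolding cart_adj_def by simp
  then show "v \<in> {(fst u, (snd u + 1) mod 4), (fst u, (snd u + 4 - 1) mod 4), ((fst u + 1) mod n, snd u), ((fst u + n - 1) mod n, snd u)}"
    using cyc_nb[of 4 "snd v" "snd u"] cyc_nb[of n "fst v" "fst u"]
    by (cases v) auto
qed

lemma deg_le:
  fixes n :: nat
  shows "card {v \<in> {0..<n} \<times> {0..<4}. cart_adj (cycle_adj n) (cycle_adj 4) v u} \<le> 4"
proof -
  have "card {v \<in> {0..<n} \<times> {0..<4}. cart_adj (cycle_adj n) (cycle_adj 4) v u} \<le>
     card {(fst u, (snd u + 1) mod 4), (fst u, (snd u + 4 - 1) mod 4), ((fst u + 1) mod n, snd u), ((fst u + n - 1) mod n, snd u)}"
    by (rule card_mono[OF _ nbset_sub]) simp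
  also have "\<dots> \<le> 4" using card_length[of "[(fst u, (snd u + 1) mod 4), (fst u, (snd u + 4 - 1) mod 4), ((fst u + 1) mod n, snd u), ((fst u + n - 1) mod n, snd u)]"]
    by simp
  finally show ?thesis .
qed

lemma even_sym_card:
  fixes T :: "(('a::linorder) \<times> 'a) set"
  assumes fin: "finite T" and sym: "\<And>u w. (u, w) \<in> T \<Longrightarrow> (w, u) \<in> T"
    and irr: "\<And>u. (u, u) \<notin> T"
  shows "even (card T)"
proof -
  define A where "A = {p \<in> T. fst p < snd p}"
  define B where "B = {p \<in> T. snd p < fst p}"
  have TAB: "T = A \<union> B" unfolding A_def B_def using irr
    by (auto, metis linorder_neqE prod.collapse)
  have dis: "A \<inter> B = {}" unfolding A_def B_def by auto
  have BA: "B = prod.swap ` A" unfolding A_def B_def using sym by force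
  have "card B = card A" unfolding BA by (rule card_image) (auto simp: inj_on_def)
  moreover have "card T = card A + card B" unfolding TAB
    by (rule card_Un_disjoint) (use fin TAB dis in auto)
  ultimately show ?thesis by simp
qed

lemma lower:
  fixes n :: nat
  assumes n3: "n \<ge> 3" and odd: "odd n"
    and tds: "total_dom_set ({0..<n} \<times> {0..<4}) (cart_adj (cycle_adj n) (cycle_adj 4)) D"
  shows "card D \<ge> n + 1"
proof -
  let ?V = "{0..<n} \<times> {0..<(4::nat)}"
  let ?E = "cart_adj (cycle_adj n) (cycle_adj 4)"
  have DV: "D \<subseteq> ?V" and dom: "\<And>v. v \<in> ?V \<Longrightarrow> \<exists>u\<in>D. ?E v u"
    using tds unfolding total_dom_set_def by auto
  have finV: "finite ?V" by simp
  have finD: "finite D" using DV finite_subset finV by blast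
  have cardV: "card ?V = 4 * n" by (simp add: card_cartesian_product)
  define f where "f v = card {u \<in> D. ?E v u}" for v
  have swap: "(\<Sum>v\<in>?V. f v) = (\<Sum>u\<in>D. card {v \<in> ?V. ?E v u})"
    using sum.swap_restrict[OF finV finD, of "\<lambda>_ _. (1::nat)" ?E]
    unfolding f_def by simp
  have up: "(\<Sum>v\<in>?V. f v) \<le> 4 * card D"
  proof -
    have "(\<Sum>u\<in>D. card {v \<in> ?V. ?E v u}) \<le> (\<Sum>u\<in>D. 4)"
      by (rule sum_mono) (rule deg_le)
    then show ?thesis using swap by simp
  qed
  have f1: "\<And>v. v \<in> ?V \<Longrightarrow> f v \<ge> 1"
  proof -
    fix v assume "v \<in> ?V"
    then obtain u where "u \<in> D" "?E v u" using dom by blast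
    then have "{u \<in> D. ?E v u} \<noteq> {}" by blast
    then show "f v \<ge> 1" unfolding f_def using finD
      by (simp add: Suc_le_eq card_gt_0_iff)
  qed
  have low: "(\<Sum>v\<in>?V. f v) \<ge> 4 * n"
  proof -
    have "(\<Sum>v\<in>?V. (1::nat)) \<le> (\<Sum>v\<in>?V. f v)" by (rule sum_mono) (rule f1)
    then show ?thesis using cardV by simp
  qed
  have ge: "card D \<ge> n" using up low by simp
  show ?thesis
  proof (rule ccontr)
    assume "\<not> ?thesis"
    then have cD: "card D = n" using ge by simp
    have feq: "f v = 1" if vV: "v \<in> ?V" for v
    proof (rule ccontr)
      assume "f v \<noteq> 1"
      then have "f v \<ge> 2" using f1[OF vV] by simp
      have "(\<Sum>w\<in>?V. f w) = f v + (\<Sum>w\<in>?V - {v}. f w)"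
        using sum.remove[OF finV vV] by simp
      moreover have "(\<Sum>w\<in>?V - {v}. (1::nat)) \<le> (\<Sum>w\<in>?V - {v}. f w)"
        by (rule sum_mono) (use f1 in auto)
      moreover have "(\<Sum>w\<in>?V - {v}. (1::nat)) = 4 * n - 1"
        using cardV vV by (simp add: card_Diff_singleton)
      moreover have "n \<ge> 1" using n3 by simp
      ultimately have "(\<Sum>w\<in>?V. f w) > 4 * n" using \<open>f v \<ge> 2\<close> by linarith
      then show False using up cD by simp
    qed
    define T where "T = Sigma D (\<lambda>u. {w \<in> D. ?E u w})"
    have finT: "finite T" unfolding T_def using finD by simp
    have "card T = (\<Sum>u\<in>D. card {w \<in> D. ?E u w})"
      unfolding T_def by (rule card_SigmaI) (use finD in auto)
    also have "\<dots> = (\<Sum>u\<in>D. 1)"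
      by (rule sum.cong) (use feq DV f_def in auto)
    finally have "card T = n" using cD by simp
    moreover have "even (card T)"
      by (rule even_sym_card[OF finT]) (auto simp: T_def intro: cart_sym simp: cart_irr)
    ultimately show False using odd by simp
  qed
qed

definition cc :: "nat \<Rightarrow> nat" where "cc a = (if a mod 4 = 0 then 0 else 2)"

definition DD :: "nat \<Rightarrow> (nat \<times> nat) set" where
  "DD n = {(a, b). a < n \<and> even a \<and> (b = cc a \<or> b = cc a + 1)}"

definition MM :: "nat \<Rightarrow> (nat \<times> nat) set set" where
  "MM n = (\<lambda>a. {(a, cc a), (a, cc a + 1)}) ` {a. a < n \<and> even a}"

lemma constr_tds:
  assumes n3: "n \<ge> 3" and odd: "odd n"
  shows "total_dom_set ({0..<n} \<times> {0..<4}) (cart_adj (cycle_adj n) (cycle_adj 4)) (DD n)"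
  unfolding total_dom_set_def
proof (intro conjI ballI)
  show "DD n \<subseteq> {0..<n} \<times> {0..<4}" unfolding DD_def cc_def by auto
next
  fix v assume "v \<in> {0..<n} \<times> {0..<(4::nat)}"
  then obtain a b where v: "v = (a, b)" and ab: "a < n" "b < 4" by auto
  show "\<exists>u\<in>DD n. cart_adj (cycle_adj n) (cycle_adj 4) v u"
  proof (cases "even a")
    case True
    define w where "w = (if a mod 4 = 0 then (if b = 0 \<or> b = 2 then 1 else 0) else (if b = 0 \<or> b = 2 then 3 else (2::nat)))"
    have "(a, w) \<in> DD n" unfolding DD_def cc_def w_def using True ab by auto
    moreover have "cycle_adj 4 b w"
      using ab(2) unfolding w_def
      by (cases "a mod 4 = 0"; cases b; auto simp: cycle_adj_def; rename_tac k; case_tac k; auto; rename_tac k; case_tac k; auto)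
    ultimately show ?thesis unfolding v cart_adj_def by - (rule bexI[of _ "(a, w)"], auto)
  next
    case False
    have a1: "a \<ge> 1" using False by (cases a) auto
    have a2: "a + 1 < n" using ab False odd by (metis Suc_eq_plus1 Suc_lessI even_Suc)
    have l1: "(a + 1) mod 4 = 0 \<longleftrightarrow> (a - 1) mod 4 \<noteq> 0" using False by presburger
    have l3: "even (a - 1)" "even (a + 1)" using False by presburger+
    define r where "r = (if ((a + 1) mod 4 = 0) = (b \<le> 1) then a + 1 else a - 1)"
    have main: "even r \<and> r < n \<and> cycle_adj n a r \<and> (r mod 4 = 0 \<longleftrightarrow> b \<le> 1)"
    proof (cases "((a + 1) mod 4 = 0) = (b \<le> 1)")
      case True
      then have r: "r = a + 1" unfolding r_def by simp
      have "(a + 1) mod n = a + 1" using a2 by simp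
      then have "cycle_adj n a (a + 1)" unfolding cycle_adj_def using a2 by simp
      then show ?thesis unfolding r using l3 a2 True by simp
    next
      case F: False
      then have r: "r = a - 1" unfolding r_def by simp
      have "a - 1 + 1 = a" using a1 by simp
      then have "(a - 1 + 1) mod n = a" using ab by simp
      have c: "cycle_adj n a (a - 1)"
      proof -
        have "a - 1 < n" using ab by simp
        moreover have "a \<noteq> a - 1" using a1 by simp
        moreover have "a = (a - 1 + 1) mod n" using \<open>(a - 1 + 1) mod n = a\<close> by (rule sym)
        moreover note ab
        ultimately show ?thesis unfolding cycle_adj_def by - (intro conjI disjI2; assumption)
      qed
      have "(a - 1) mod 4 = 0 \<longleftrightarrow> b \<le> 1" using F l1 by (cases "b \<le> 1") simp_all
      moreover have "a - 1 < n" using ab by simp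
      ultimately show ?thesis unfolding r using l3 c by blast
    qed
    have ccr: "b = cc r \<or> b = cc r + 1"
    proof (cases "b \<le> 1")
      case True
      then have "cc r = 0" using main unfolding cc_def by simp
      then show ?thesis using True by linarith
    next
      case False
      then have "cc r = 2" using main unfolding cc_def by simp
      then show ?thesis using False ab(2) by linarith
    qed
    have "(r, b) \<in> DD n" unfolding DD_def using main ccr by simp
    moreover have "cycle_adj n a r" using main by simp
    ultimately show ?thesis unfolding v cart_adj_def by - (rule bexI[of _ "(r, b)"], auto)
  qed
qed

lemma cc_cases: "cc a = 0 \<or> cc a = 2"
  unfolding cc_def by auto

lemma constr_pm:
  "perfect_matching (DD n) (cart_adj (cycle_adj n) (cycle_adj 4)) (MM n)"
  unfolding perfect_matching_def
proof (intro conjI ballI)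
  fix e assume "e \<in> MM n"
  then obtain a where a: "a < n" "even a" and e: "e = {(a, cc a), (a, cc a + 1)}"
    unfolding MM_def by auto
  have adj: "cycle_adj 4 (cc a) (cc a + 1)"
    using cc_cases[of a] unfolding cycle_adj_def by auto
  show "\<exists>u v. e = {u, v} \<and> u \<in> DD n \<and> v \<in> DD n \<and> u \<noteq> v \<and> cart_adj (cycle_adj n) (cycle_adj 4) u v"
    apply (rule exI[of _ "(a, cc a)"], rule exI[of _ "(a, cc a + 1)"])
    using a e adj unfolding DD_def cart_adj_def by auto
next
  fix v assume "v \<in> DD n"
  then obtain a b where v: "v = (a, b)" and a: "a < n" "even a" and b: "b = cc a \<or> b = cc a + 1"
    unfolding DD_def by auto
  show "\<exists>!e. e \<in> MM n \<and> v \<in> e"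
  proof (rule ex1I[of _ "{(a, cc a), (a, cc a + 1)}"])
    show "{(a, cc a), (a, cc a + 1)} \<in> MM n \<and> v \<in> {(a, cc a), (a, cc a + 1)}"
      using a b v unfolding MM_def by auto
  next
    fix e assume "e \<in> MM n \<and> v \<in> e"
    then obtain a' where e: "e = {(a', cc a'), (a', cc a' + 1)}" and "v \<in> e"
      unfolding MM_def by auto
    then have "a' = a" using v by auto
    then show "e = {(a, cc a), (a, cc a + 1)}" using e by simp
  qed
qed

lemma card_DD:
  assumes odd: "odd n"
  shows "card (DD n) = n + 1"
proof -
  define g where "g p = (2 * fst p, cc (2 * fst p) + snd p)" for p :: "nat \<times> nat"
  have eq: "DD n = g ` ({0..<(n+1) div 2} \<times> {0,1})"
  proof
    show "DD n \<subseteq> g ` ({0..<(n+1) div 2} \<times> {0,1})"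
    proof
      fix x assume "x \<in> DD n"
      then obtain a b where x: "x = (a, b)" and a: "a < n" "even a" and b: "b = cc a \<or> b = cc a + 1"
        unfolding DD_def by auto
      have "x = g (a div 2, b - cc a)" unfolding g_def x using a b by auto
      moreover have "(a div 2, b - cc a) \<in> {0..<(n+1) div 2} \<times> {0,1}"
        using a b odd by auto
      ultimately show "x \<in> g ` ({0..<(n+1) div 2} \<times> {0,1})" by blast
    qed
  next
    show "g ` ({0..<(n+1) div 2} \<times> {0,1}) \<subseteq> DD n"
    proof -
      have lt: "2 * i < n" if "i < (n + 1) div 2" for i using that odd by presburger
      show ?thesis unfolding g_def DD_def using lt by auto
    qed
  qed
  have inj: "inj_on g ({0..<(n+1) div 2} \<times> {0,1})"
    unfolding g_def inj_on_def by auto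
  have "card (DD n) = card ({0..<(n+1) div 2} \<times> {0::nat,1})"
    unfolding eq by (rule card_image[OF inj])
  also have "\<dots> = (n + 1) div 2 * 2" by (simp add: card_cartesian_product)
  also have "\<dots> = n + 1" using odd by presburger
  finally show ?thesis .
qed

lemma pd_td:
  assumes "paired_dom_set V (cart_adj (cycle_adj n) (cycle_adj m)) D"
  shows "total_dom_set V (cart_adj (cycle_adj n) (cycle_adj m)) D"
proof -
  let ?E = "cart_adj (cycle_adj n) (cycle_adj m)"
  from assms obtain M where DV: "D \<subseteq> V" and dom: "\<forall>v\<in>V - D. \<exists>u\<in>D. ?E v u"
    and pm: "perfect_matching D ?E M"
    unfolding paired_dom_set_def by auto
  have "\<exists>u\<in>D. ?E v u" if "v \<in> V" for v
  proof (cases "v \<in> D")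
    case True
    have pm1: "\<forall>e\<in>M. \<exists>u v. e = {u, v} \<and> u \<in> D \<and> v \<in> D \<and> u \<noteq> v \<and> ?E u v"
      and pm2: "\<forall>v\<in>D. \<exists>!e. e \<in> M \<and> v \<in> e"
      using pm unfolding perfect_matching_def by (blast, blast)
    from pm2 True have "\<exists>!e. e \<in> M \<and> v \<in> e" by (rule bspec)
    then obtain e where "e \<in> M" "v \<in> e" by (rule ex1E) blast
    from pm1 \<open>e \<in> M\<close> have "\<exists>u v. e = {u, v} \<and> u \<in> D \<and> v \<in> D \<and> u \<noteq> v \<and> ?E u v" by (rule bspec)
    then obtain x y where "e = {x, y}" "x \<in> D" "y \<in> D" "?E x y" by blast
    then have "v = x \<or> v = y" using \<open>v \<in> e\<close> by simp
    then show ?thesis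
    proof
      assume "v = x" then show ?thesis using \<open>y \<in> D\<close> \<open>?E x y\<close> by blast
    next
      assume "v = y" then show ?thesis using \<open>x \<in> D\<close> cart_sym[OF \<open>?E x y\<close>] by blast
    qed
  next
    case False
    then show ?thesis using dom that by blast
  qed
  then show ?thesis using DV unfolding total_dom_set_def by blast
qed

theorem lemma4p1:
  fixes n :: nat
  assumes "n \<ge> 3" and "n mod 4 = 1 \<or> n mod 4 = 3"
  shows "paired_dom_number (cycle_verts n \<times> cycle_verts 4) (cart_adj (cycle_adj n) (cycle_adj 4)) = n + 1
    \<and> total_dom_number (cycle_verts n \<times> cycle_verts 4) (cart_adj (cycle_adj n) (cycle_adj 4)) = n + 1"
proof -
  have odd: "odd n" using assms(2) by presburger
  have V: "cycle_verts n \<times> cycle_verts 4 = {0..<n} \<times> {0..<4}" unfolding cycle_verts_def by simp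
  let ?V = "{0..<n} \<times> {0..<(4::nat)}"
  let ?E = "cart_adj (cycle_adj n) (cycle_adj 4)"
  have tds: "total_dom_set ?V ?E (DD n)" by (rule constr_tds[OF assms(1) odd])
  have pds: "paired_dom_set ?V ?E (DD n)"
    using tds constr_pm unfolding paired_dom_set_def total_dom_set_def by blast
  have c: "card (DD n) = n + 1" by (rule card_DD[OF odd])
  have "paired_dom_number ?V ?E = n + 1"
    unfolding paired_dom_number_def
  proof (rule Least_equality)
    show "\<exists>D. paired_dom_set ?V ?E D \<and> card D = n + 1" using pds c by blast
  next
    fix k assume "\<exists>D. paired_dom_set ?V ?E D \<and> card D = k"
    then obtain D where "paired_dom_set ?V ?E D" "card D = k" by blast
    then show "n + 1 \<le> k" using lower[OF assms(1) odd pd_td] by blast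
  qed
  moreover have "total_dom_number ?V ?E = n + 1"
    unfolding total_dom_number_def
  proof (rule Least_equality)
    show "\<exists>D. total_dom_set ?V ?E D \<and> card D = n + 1" using tds c by blast
  next
    fix k assume "\<exists>D. total_dom_set ?V ?E D \<and> card D = k"
    then obtain D where "total_dom_set ?V ?E D" "card D = k" by blast
    then show "n + 1 \<le> k" using lower[OF assms(1) odd] by blast
  qed
  ultimately show ?thesis unfolding V by simp
qed

end
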